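(* There is no embedding $\mathcal{B}^X \hookrightarrow \mathcal{K}_2^X$ for any $X \subseteq \omega$.
   Context: A partial combinatory algebra (pca) is a set $A$ with a partial binary application $\cdot$ containing distinct elements $\mathrm{s},\mathrm{k}$ with $\mathrm{k}ab\downarrow = a$, $\mathrm{s}ab\downarrow$, and $\mathrm{s}abc \simeq (ac)(bc)$. Given pcas $\mathcal{A},\mathcal{B}$, an embedding $\mathcal{A}\hookrightarrow\mathcal{B}$ is an injection $f$ such that whenever $aa'\downarrow$ in $\mathcal{A}$, $f(a)f(a')\downarrow = f(aa')$. Kleene's second model $\mathcal{K}_2$ is taken with carrier $\omega^\omega$ and application $g\cdot h = \Phi^{g\oplus h}_{g(0)}$, where $\Phi_e$ is the $e$-th Turing functional and $g\cdot h$ is defined iff the function on the right is total. Van Oosten's sequential computation model $\mathcal{B}$ is the same definition but with carrier the set of partial functions $\omega\rightharpoonup\omega$ (application always defined). For $X\subseteq\omega$, $\mathcal{K}_2^X$ is the sub-pca of $X$-computable total functions and $\mathcal{B}^X$ the sub-pca of partial $X$-computable functions. *)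

theory Defs
  imports Main "HOL-Library.Nat_Bijection"
begin

text \<open>Programs are coded by natural numbers; the code e is decoded via e mod 9
(the instruction) and prod_decode (e div 9) (sub-programs).  The instructions
generate exactly the unary functions partial recursive relative to a (partial)
oracle O :: nat \<Rightarrow> nat option, with the sequential convention that querying the
oracle at a point where it is undefined diverges.
  0: zero, 1: successor, 2: first projection of a pair code, 3: second projection,
  4: oracle query, 5: composition, 6: pairing, 7: primitive recursion,
  8: minimisation.\<close>

inductive comp :: "(nat \<Rightarrow> nat option) \<Rightarrow> nat \<Rightarrow> nat \<Rightarrow> nat \<Rightarrow> bool" for Or where
  c_zero: "e mod 9 = 0 \<Longrightarrow> comp Or e x 0"
| c_succ: "e mod 9 = 1 \<Longrightarrow> comp Or e x (Suc x)"
| c_fst:  "e mod 9 = 2 \<Longrightarrow> comp Or e x (fst (prod_decode x))"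
| c_snd:  "e mod 9 = 3 \<Longrightarrow> comp Or e x (snd (prod_decode x))"
| c_orc:  "e mod 9 = 4 \<Longrightarrow> Or x = Some y \<Longrightarrow> comp Or e x y"
| c_comp: "e mod 9 = 5 \<Longrightarrow> prod_decode (e div 9) = (a, b) \<Longrightarrow>
             comp Or b x z \<Longrightarrow> comp Or a z y \<Longrightarrow> comp Or e x y"
| c_pair: "e mod 9 = 6 \<Longrightarrow> prod_decode (e div 9) = (a, b) \<Longrightarrow>
             comp Or a x y1 \<Longrightarrow> comp Or b x y2 \<Longrightarrow> comp Or e x (prod_encode (y1, y2))"
| c_prim0: "e mod 9 = 7 \<Longrightarrow> prod_decode (e div 9) = (a, b) \<Longrightarrow>
             prod_decode x = (0, w) \<Longrightarrow> comp Or a w y \<Longrightarrow> comp Or e x y"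
| c_primS: "e mod 9 = 7 \<Longrightarrow> prod_decode (e div 9) = (a, b) \<Longrightarrow>
             prod_decode x = (Suc k, w) \<Longrightarrow> comp Or e (prod_encode (k, w)) z \<Longrightarrow>
             comp Or b (prod_encode (k, prod_encode (z, w))) y \<Longrightarrow> comp Or e x y"
| c_mu:   "e mod 9 = 8 \<Longrightarrow> comp Or (e div 9) (prod_encode (k, x)) 0 \<Longrightarrow>
             (\<forall>j<k. \<exists>v. 0 < v \<and> comp Or (e div 9) (prod_encode (j, x)) v) \<Longrightarrow>
             comp Or e x k"

definition Phi :: "nat \<Rightarrow> (nat \<Rightarrow> nat option) \<Rightarrow> nat \<Rightarrow> nat option" where
  "Phi e Or x = (if \<exists>y. comp Or e x y then Some (THE y. comp Or e x y) else None)"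

definition join :: "(nat \<Rightarrow> nat option) \<Rightarrow> (nat \<Rightarrow> nat option) \<Rightarrow> nat \<Rightarrow> nat option" where
  "join g h n = (if even n then g (n div 2) else h (n div 2))"

definition K2_app :: "(nat \<Rightarrow> nat) \<Rightarrow> (nat \<Rightarrow> nat) \<Rightarrow> (nat \<Rightarrow> nat) option" where
  "K2_app g h =
     (let F = Phi (g 0) (join (Some \<circ> g) (Some \<circ> h))
      in if (\<forall>n. F n \<noteq> None) then Some (\<lambda>n. the (F n)) else None)"

definition B_app :: "(nat \<Rightarrow> nat option) \<Rightarrow> (nat \<Rightarrow> nat option) \<Rightarrow> (nat \<Rightarrow> nat option) option" where
  "B_app g h = Some (case g 0 of None \<Rightarrow> (\<lambda>_. None) | Some e \<Rightarrow> Phi e (join g h))"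

definition chi :: "nat set \<Rightarrow> nat \<Rightarrow> nat option" where
  "chi X n = Some (if n \<in> X then 1 else 0)"

definition K2_X :: "nat set \<Rightarrow> (nat \<Rightarrow> nat) set" where
  "K2_X X = {f. \<exists>e. Phi e (chi X) = Some \<circ> f}"

definition B_X :: "nat set \<Rightarrow> (nat \<Rightarrow> nat option) set" where
  "B_X X = {f. \<exists>e. Phi e (chi X) = f}"

definition sub_app :: "'a set \<Rightarrow> ('a \<Rightarrow> 'a \<Rightarrow> 'a option) \<Rightarrow> 'a \<Rightarrow> 'a \<Rightarrow> 'a option" where
  "sub_app C app a b = (case app a b of None \<Rightarrow> None | Some c \<Rightarrow> if c \<in> C then Some c else None)"

definition pca_embedding ::
  "'a set \<Rightarrow> ('a \<Rightarrow> 'a \<Rightarrow> 'a option) \<Rightarrow> 'b set \<Rightarrow> ('b \<Rightarrow> 'b \<Rightarrow> 'b option) \<Rightarrow> ('a \<Rightarrow> 'b) \<Rightarrow> bool" where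
  "pca_embedding A appA B appB f \<longleftrightarrow>
     inj_on f A \<and> f ` A \<subseteq> B \<and>
     (\<forall>a\<in>A. \<forall>a'\<in>A. \<forall>c. appA a a' = Some c \<longrightarrow> appB (f a) (f a') = Some (f c))"

end

theory Submission
  imports Defs
begin


lemma compE0: "Defs.comp Or e x y \<Longrightarrow> e mod 9 = 0 \<Longrightarrow> y = 0"
  by (erule comp.cases) simp_all
lemma compE1: "Defs.comp Or e x y \<Longrightarrow> e mod 9 = 1 \<Longrightarrow> y = Suc x"
  by (erule comp.cases) simp_all
lemma compE2: "Defs.comp Or e x y \<Longrightarrow> e mod 9 = 2 \<Longrightarrow> y = fst (prod_decode x)"
  by (erule comp.cases) simp_all
lemma compE3: "Defs.comp Or e x y \<Longrightarrow> e mod 9 = 3 \<Longrightarrow> y = snd (prod_decode x)"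
  by (erule comp.cases) simp_all
lemma compE4: "Defs.comp Or e x y \<Longrightarrow> e mod 9 = 4 \<Longrightarrow> Or x = Some y"
  by (erule comp.cases) simp_all
lemma compE5: "Defs.comp Or e x y \<Longrightarrow> e mod 9 = 5 \<Longrightarrow> prod_decode (e div 9) = (a, b) \<Longrightarrow>
   \<exists>z. Defs.comp Or b x z \<and> Defs.comp Or a z y"
  by (erule comp.cases) auto
lemma compE6: "Defs.comp Or e x y \<Longrightarrow> e mod 9 = 6 \<Longrightarrow> prod_decode (e div 9) = (a, b) \<Longrightarrow>
   \<exists>y1 y2. y = prod_encode (y1, y2) \<and> Defs.comp Or a x y1 \<and> Defs.comp Or b x y2"
  by (erule comp.cases) auto
lemma compE7a: "Defs.comp Or e x y \<Longrightarrow> e mod 9 = 7 \<Longrightarrow> prod_decode (e div 9) = (a, b) \<Longrightarrow>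
   prod_decode x = (0, w) \<Longrightarrow> Defs.comp Or a w y"
  by (erule comp.cases) simp_all
lemma compE7b: "Defs.comp Or e x y \<Longrightarrow> e mod 9 = 7 \<Longrightarrow> prod_decode (e div 9) = (a, b) \<Longrightarrow>
   prod_decode x = (Suc k, w) \<Longrightarrow>
   \<exists>z. Defs.comp Or e (prod_encode (k, w)) z \<and> Defs.comp Or b (prod_encode (k, prod_encode (z, w))) y"
  by (erule comp.cases) auto
lemma compE8: "Defs.comp Or e x y \<Longrightarrow> e mod 9 = 8 \<Longrightarrow>
   Defs.comp Or (e div 9) (prod_encode (y, x)) 0 \<and> (\<forall>j<y. \<exists>v>0. Defs.comp Or (e div 9) (prod_encode (j, x)) v)"
  by (erule comp.cases) simp_all

lemma comp_det:
  "Defs.comp Or e x y \<Longrightarrow> Defs.comp Or e x y' \<Longrightarrow> y' = y"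
proof (induction arbitrary: y' rule: comp.induct)
  case (c_mu e k x)
  note IH0 = c_mu.IH(1)[rule_format] and IHall = c_mu.IH(2)
  have m8: "e mod 9 = 8" by fact
  from c_mu.prems show ?case
  proof (cases rule: comp.cases)
    case c_mu
    note P0 = c_mu(2) and Pall = c_mu(3)
    show ?thesis
    proof (rule linorder_cases[of k y'])
      assume "k < y'"
      then obtain v where "0 < v" "Defs.comp Or (e div 9) (prod_encode (k, x)) v"
        using Pall by blast
      moreover have "\<And>u. Defs.comp Or (e div 9) (prod_encode (k, x)) u \<Longrightarrow> u = 0"
        using IH0 by blast
      ultimately show ?thesis by blast
    next
      assume "y' < k"
      then obtain v where "0 < v" "\<And>u. Defs.comp Or (e div 9) (prod_encode (y', x)) u \<Longrightarrow> u = v"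
        using IHall by blast
      with P0 show ?thesis by blast
    qed simp
  qed (simp_all add: m8)
next
  case (c_comp e a b x z y)
  from compE5[OF c_comp.prems c_comp.hyps(1,2)] c_comp.IH show ?case by blast
next
  case (c_pair e a b x y1 y2)
  from compE6[OF c_pair.prems c_pair.hyps(1,2)] c_pair.IH show ?case by blast
next
  case (c_prim0 e a b x w y)
  from compE7a[OF c_prim0.prems c_prim0.hyps(1,2,3)] c_prim0.IH show ?case by blast
next
  case (c_primS e a b x k w z y)
  from compE7b[OF c_primS.prems c_primS.hyps(1,2,3)] c_primS.IH show ?case by blast
qed (auto dest: compE0 compE1 compE2 compE3 compE4)



datatype prog = Zp | Sp | Fp | Sn | Op | Cp prog prog | Pp prog prog | Rp prog prog

primrec eval :: "(nat \<Rightarrow> nat) \<Rightarrow> prog \<Rightarrow> nat \<Rightarrow> nat" where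
  "eval g Zp x = 0"
| "eval g Sp x = Suc x"
| "eval g Fp x = fst (prod_decode x)"
| "eval g Sn x = snd (prod_decode x)"
| "eval g Op x = g x"
| "eval g (Cp p q) x = eval g p (eval g q x)"
| "eval g (Pp p q) x = prod_encode (eval g p x, eval g q x)"
| "eval g (Rp p q) x = rec_nat (eval g p (snd (prod_decode x)))
     (\<lambda>i r. eval g q (prod_encode (i, prod_encode (r, snd (prod_decode x))))) (fst (prod_decode x))"

primrec code :: "prog \<Rightarrow> nat" where
  "code Zp = 0"
| "code Sp = 1"
| "code Fp = 2"
| "code Sn = 3"
| "code Op = 4"
| "code (Cp p q) = 5 + 9 * prod_encode (code p, code q)"
| "code (Pp p q) = 6 + 9 * prod_encode (code p, code q)"
| "code (Rp p q) = 7 + 9 * prod_encode (code p, code q)"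

lemma ce_Rp:
  assumes IHp: "\<And>x. Defs.comp (\<lambda>a. Some (g a)) (code p) x (eval g p x)"
    and IHq: "\<And>x. Defs.comp (\<lambda>a. Some (g a)) (code q) x (eval g q x)"
  shows "Defs.comp (\<lambda>a. Some (g a)) (code (Rp p q)) x (eval g (Rp p q) x)"
proof -
  have "\<And>x. fst (prod_decode x) = k \<Longrightarrow> Defs.comp (\<lambda>a. Some (g a)) (code (Rp p q)) x (eval g (Rp p q) x)" for k
  proof (induction k)
    case 0
    obtain w where w: "prod_decode x = (0, w)" using 0 by (cases "prod_decode x") auto
    have m: "code (Rp p q) mod 9 = 7" "prod_decode (code (Rp p q) div 9) = (code p, code q)" by simp_all
    have "Defs.comp (\<lambda>a. Some (g a)) (code (Rp p q)) x (eval g p w)"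
      by (rule c_prim0[OF m w IHp])
    then show ?case using w by simp
  next
    case (Suc k)
    obtain w where w: "prod_decode x = (Suc k, w)" using Suc.prems by (cases "prod_decode x") auto
    have m: "code (Rp p q) mod 9 = 7" "prod_decode (code (Rp p q) div 9) = (code p, code q)" by simp_all
    have A: "Defs.comp (\<lambda>a. Some (g a)) (code (Rp p q)) (prod_encode (k, w)) (eval g (Rp p q) (prod_encode (k, w)))"
      using Suc.IH[of "prod_encode (k, w)"] by simp
    have "Defs.comp (\<lambda>a. Some (g a)) (code (Rp p q)) x
       (eval g q (prod_encode (k, prod_encode (eval g (Rp p q) (prod_encode (k, w)), w))))"
      by (rule c_primS[OF m w A IHq])
    then show ?case using w by simp
  qed
  then show ?thesis by blast
qed

lemma comp_eval: "Defs.comp (\<lambda>a. Some (g a)) (code p) x (eval g p x)"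
proof (induction p arbitrary: x)
  case Zp then show ?case by (simp add: c_zero)
next
  case Sp then show ?case by (simp add: c_succ)
next
  case Fp then show ?case by (simp add: c_fst)
next
  case Sn then show ?case by (simp add: c_snd)
next
  case Op then show ?case by (simp add: c_orc)
next
  case (Cp p q)
  have "Defs.comp (\<lambda>a. Some (g a)) (code (Cp p q)) x (eval g p (eval g q x))"
    by (rule c_comp[where a="code p" and b="code q" and z="eval g q x"]) (simp_all add: Cp.IH)
  then show ?case by (simp only: eval.simps)
next
  case (Pp p q)
  have "Defs.comp (\<lambda>a. Some (g a)) (code (Pp p q)) x (prod_encode (eval g p x, eval g q x))"
    by (rule c_pair[where a="code p" and b="code q"]) (simp_all add: Pp.IH)
  then show ?case by (simp only: eval.simps)
next
  case (Rp p q)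
  then show ?case by (rule ce_Rp)
qed

lemma comp_eval_iff: "Defs.comp (\<lambda>a. Some (g a)) (code p) x y \<longleftrightarrow> y = eval g p x"
  using comp_eval[of g p x] comp_det[of _ "code p" x "eval g p x" y] by auto



definition "idp = Pp Fp Sn"
lemma eval_idp[simp]: "eval g idp x = x" by (simp add: idp_def)

primrec constp :: "nat \<Rightarrow> prog" where
  "constp 0 = Zp" | "constp (Suc n) = Cp Sp (constp n)"
lemma eval_constp[simp]: "eval g (constp n) x = n" by (induction n) auto

definition "P1 a = Cp Fp a"
definition "P2 a = Cp Sn a"
lemma eval_P1[simp]: "eval g (P1 a) x = fst (prod_decode (eval g a x))" by (simp add: P1_def)
lemma eval_P2[simp]: "eval g (P2 a) x = snd (prod_decode (eval g a x))" by (simp add: P2_def)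

definition "iterp f = Rp idp (Cp f (Cp Fp Sn))"
lemma eval_iterp: "eval g (iterp f) (prod_encode (n, w)) = (eval g f ^^ n) w"
  by (induction n) (simp_all add: iterp_def)
definition "ITER f N W = Cp (iterp f) (Pp N W)"
lemma eval_ITER[simp]: "eval g (ITER f N W) x = (eval g f ^^ eval g N x) (eval g W x)"
  by (simp add: ITER_def eval_iterp)

definition "addp = iterp Sp"
definition "ADD a b = Cp addp (Pp b a)"
lemma funpow_Suc_nat: "(Suc ^^ n) w = w + n" by (induction n) auto
lemma eval_ADD[simp]: "eval g (ADD a b) x = eval g a x + eval g b x"
proof -
  have "eval g Sp = Suc" by (rule ext) simp
  then show ?thesis by (simp add: ADD_def addp_def eval_iterp funpow_Suc_nat)
qed

definition "predp = Cp (Rp Zp Fp) (Pp idp Zp)"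
lemma eval_predp[simp]: "eval g predp x = x - 1"
  by (cases x) (simp_all add: predp_def)

definition "SUB a b = ITER predp b a"
lemma funpow_pred: "((\<lambda>x::nat. x - Suc 0) ^^ n) w = w - n" by (induction n) auto
lemma eval_SUB[simp]: "eval g (SUB a b) x = eval g a x - eval g b x"
proof -
  have "eval g predp = (\<lambda>x. x - 1)" by (rule ext) simp
  then show ?thesis by (simp add: SUB_def funpow_pred del: funpow.simps)
qed

definition "mulp = Rp Zp (ADD (Cp Fp Sn) (Cp Sn Sn))"
lemma eval_mulp: "eval g mulp (prod_encode (k, w)) = k * w"
  by (induction k) (simp_all add: mulp_def)
definition "MUL a b = Cp mulp (Pp a b)"
lemma eval_MUL[simp]: "eval g (MUL a b) x = eval g a x * eval g b x"
  by (simp add: MUL_def eval_mulp)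

definition "DIST a b = ADD (SUB a b) (SUB b a)"
lemma eval_DIST[simp]: "eval g (DIST a b) x = 0 \<longleftrightarrow> eval g a x = eval g b x"
  by (auto simp add: DIST_def)

definition "NZ a = SUB (constp 1) a"
lemma eval_NZ[simp]: "eval g (NZ a) x = 0 \<longleftrightarrow> eval g a x \<noteq> 0"
  by (auto simp add: NZ_def)

definition "SG a = NZ (NZ a)"
lemma eval_SG[simp]: "eval g (SG a) x = (if eval g a x = 0 then 0 else 1)"
  by (simp add: SG_def NZ_def)

definition "PAIR = Pp"
lemma eval_PAIR[simp]: "eval g (PAIR a b) x = prod_encode (eval g a x, eval g b x)"
  by (simp add: PAIR_def)

definition "CMP = Cp"
lemma eval_CMP[simp]: "eval g (CMP a b) x = eval g a (eval g b x)"
  by (simp add: CMP_def)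



primrec encl :: "nat list \<Rightarrow> nat" where
  "encl [] = 0" | "encl (a # xs) = Suc (prod_encode (a, encl xs))"

lemma snd_decode_less: "snd (prod_decode n) < Suc n"
proof -
  have "snd (prod_decode n) \<le> prod_encode (prod_decode n)"
    by (metis le_prod_encode_2 prod.collapse)
  then show ?thesis by simp
qed

function decl :: "nat \<Rightarrow> nat list" where
  "decl 0 = []" | "decl (Suc n) = fst (prod_decode n) # decl (snd (prod_decode n))"
  by pat_completeness auto
termination by (relation "measure id") (auto simp: snd_decode_less)

lemma decl_encl[simp]: "decl (encl xs) = xs" by (induction xs) auto
lemma encl_decl[simp]: "encl (decl n) = n"
  by (induction n rule: decl.induct) auto

lemma encl_eq0[simp]: "encl xs = 0 \<longleftrightarrow> xs = []" by (cases xs) auto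

definition "tlf n = snd (prod_decode (n - 1))"
definition "hdf n = fst (prod_decode (n - 1))"

lemma prod_decode_0[simp]: "prod_decode 0 = (0, 0)"
proof -
  have "prod_encode (0, 0) = 0" by (simp add: prod_encode_def)
  then show ?thesis by (metis prod_encode_inverse)
qed

lemma tlf_encl[simp]: "tlf (encl xs) = encl (tl xs)" by (cases xs) (auto simp: tlf_def)
lemma funpow_tlf: "(tlf ^^ p) (encl xs) = encl (drop p xs)"
  by (induction p arbitrary: xs) (auto simp: drop_Suc funpow_swap1 tl_drop)
lemma hdf_encl[simp]: "xs \<noteq> [] \<Longrightarrow> hdf (encl xs) = hd xs" by (cases xs) (auto simp: hdf_def)

definition "TLp = Cp Sn predp"
definition "HDp = Cp Fp predp"
lemma eval_TLp[simp]: "eval g TLp x = tlf x" by (simp add: TLp_def tlf_def)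
lemma eval_HDp[simp]: "eval g HDp x = hdf x" by (simp add: HDp_def hdf_def)
lemma eval_TLp_fun[simp]: "eval g TLp = tlf" by (rule ext) simp

definition "ptr es p J \<longleftrightarrow> p < length es \<and> fst (prod_decode (es ! p)) = J"

definition "PTR E P J = ADD (NZ (ITER TLp P E)) (DIST (Cp Fp (Cp HDp (ITER TLp P E))) J)"

lemma eval_PTR[simp]: "eval g (PTR E P J) x = 0 \<longleftrightarrow> ptr (decl (eval g E x)) (eval g P x) (eval g J x)"
proof -
  define es where "es = decl (eval g E x)"
  have E: "eval g E x = encl es" by (simp add: es_def)
  have "(tlf ^^ eval g P x) (eval g E x) = encl (drop (eval g P x) es)"
    by (simp add: E funpow_tlf)
  then show ?thesis
    by (auto simp: PTR_def ptr_def es_def[symmetric] hd_drop_conv_nth simp del: funpow.simps)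
qed

lemma ptr_app1: "ptr es1 i J \<Longrightarrow> ptr (es1 @ es2) i J"
  by (auto simp: ptr_def nth_append)
lemma ptr_app2: "ptr es2 i J \<Longrightarrow> ptr (es1 @ es2) (length es1 + i) J"
  by (auto simp: ptr_def nth_append)
lemma ptr_cons: "ptr es i J \<Longrightarrow> ptr (a # es) (Suc i) J"
  by (auto simp: ptr_def)



definition "mkJ k oo e x y = prod_encode (k, prod_encode (oo, prod_encode (e, prod_encode (x, y))))"
definition "mkH r q h pa pb = prod_encode (r, prod_encode (q, prod_encode (h, prod_encode (pa, pb))))"

definition "MK5 a b c d e = PAIR a (PAIR b (PAIR c (PAIR d e)))"
lemma eval_MK5[simp]: "eval g (MK5 a b c d e) x = mkJ (eval g a x) (eval g b x) (eval g c x) (eval g d x) (eval g e x)"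
  by (simp add: MK5_def mkJ_def)

definition "Jp = P1 Fp"
definition "Hp = P2 Fp"
definition "EEp = Sn"
definition "Kp = P1 Jp"
definition "Orp = P1 (P2 Jp)"
definition "Ep = P1 (P2 (P2 Jp))"
definition "Xp = P1 (P2 (P2 (P2 Jp)))"
definition "Yp = P2 (P2 (P2 (P2 Jp)))"
definition "Rr = P1 Hp"
definition "Qp = P1 (P2 Hp)"
definition "Hh = P1 (P2 (P2 Hp))"
definition "PAp = P1 (P2 (P2 (P2 Hp)))"
definition "PBp = P2 (P2 (P2 (P2 Hp)))"

abbreviation "inp k oo e x y r q h pa pb E \<equiv> prod_encode (prod_encode (mkJ k oo e x y, mkH r q h pa pb), E)"

lemma eval_fields[simp]:
  "eval g Kp (inp k oo e x y r q h pa pb E) = k"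
  "eval g Orp (inp k oo e x y r q h pa pb E) = oo"
  "eval g Ep (inp k oo e x y r q h pa pb E) = e"
  "eval g Xp (inp k oo e x y r q h pa pb E) = x"
  "eval g Yp (inp k oo e x y r q h pa pb E) = y"
  "eval g Rr (inp k oo e x y r q h pa pb E) = r"
  "eval g Qp (inp k oo e x y r q h pa pb E) = q"
  "eval g Hh (inp k oo e x y r q h pa pb E) = h"
  "eval g PAp (inp k oo e x y r q h pa pb E) = pa"
  "eval g PBp (inp k oo e x y r q h pa pb E) = pb"
  "eval g EEp (inp k oo e x y r q h pa pb E) = E"
  by (simp_all add: Jp_def Hp_def EEp_def Kp_def Orp_def Ep_def Xp_def Yp_def Rr_def Qp_def Hh_def
      PAp_def PBp_def mkJ_def mkH_def)

definition "PRED a = SUB a (constp 1)"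
lemma eval_PRED[simp]: "eval g (PRED a) x = eval g a x - 1" by (simp add: PRED_def)

definition "ECODE r = DIST Ep (ADD (constp r) (MUL (constp 9) Qp))"
lemma eval_ECODE[simp]: "eval g (ECODE r) x = 0 \<longleftrightarrow> eval g Ep x = r + 9 * eval g Qp x"
  by (simp add: ECODE_def)

definition "TT = PRED Orp"
definition "C0 = ADD Kp (ADD (ECODE 0) Yp)"
definition "C1 = ADD Kp (ADD (ECODE 1) (DIST Yp (Cp Sp Xp)))"
definition "C2 = ADD Kp (ADD (ECODE 2) (DIST Yp (P1 Xp)))"
definition "C3 = ADD Kp (ADD (ECODE 3) (DIST Yp (P2 Xp)))"
definition "C4 = ADD Kp (ADD (ECODE 4) (ADD Orp (DIST Yp (CMP Op (Cp Sp (ADD Xp Xp))))))"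
definition "C5 = ADD Kp (ADD (ECODE 4) (ADD (NZ Orp) (ADD (DIST Xp (ADD Hh Hh))
   (PTR EEp PAp (MK5 (constp 0) (P1 (P1 TT)) (P2 (P1 TT)) Hh Yp)))))"
definition "C6 = ADD Kp (ADD (ECODE 4) (ADD (NZ Orp) (ADD (DIST Xp (Cp Sp (ADD Hh Hh)))
   (PTR EEp PAp (MK5 (constp 0) (P1 (P2 TT)) (P2 (P2 TT)) Hh Yp)))))"
definition "C7 = ADD Kp (ADD (ECODE 5) (ADD (PTR EEp PAp (MK5 (constp 0) Orp (P2 Qp) Xp Hh))
   (PTR EEp PBp (MK5 (constp 0) Orp (P1 Qp) Hh Yp))))"
definition "C8 = ADD Kp (ADD (ECODE 6) (ADD (PTR EEp PAp (MK5 (constp 0) Orp (P1 Qp) Xp (P1 Yp)))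
   (PTR EEp PBp (MK5 (constp 0) Orp (P2 Qp) Xp (P2 Yp)))))"
definition "C9 = ADD Kp (ADD (ECODE 7) (ADD (P1 Xp)
   (PTR EEp PAp (MK5 (constp 0) Orp (P1 Qp) (P2 Xp) Yp))))"
definition "C10 = ADD Kp (ADD (ECODE 7) (ADD (NZ (P1 Xp)) (ADD
   (PTR EEp PAp (MK5 (constp 0) Orp Ep (PAIR (PRED (P1 Xp)) (P2 Xp)) Hh))
   (PTR EEp PBp (MK5 (constp 0) Orp (P2 Qp) (PAIR (PRED (P1 Xp)) (PAIR Hh (P2 Xp))) Yp)))))"
definition "C11 = ADD Kp (ADD (ECODE 8) (ADD
   (PTR EEp PAp (MK5 (constp 0) Orp Qp (PAIR Yp Xp) (constp 0)))
   (PTR EEp PBp (MK5 (constp 1) Orp Qp Xp Yp))))"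
definition "C12 = ADD (DIST Kp (constp 1)) Yp"
definition "C13 = ADD (DIST Kp (constp 1)) (ADD (NZ Yp) (ADD (NZ Hh) (ADD
   (PTR EEp PAp (MK5 (constp 1) Orp Ep Xp (PRED Yp)))
   (PTR EEp PBp (MK5 (constp 0) Orp Ep (PAIR (PRED Yp) Xp) Hh)))))"

definition "FAC i c = ADD (DIST Rr (constp i)) c"
definition "NODEOK = MUL (FAC 0 C0) (MUL (FAC 1 C1) (MUL (FAC 2 C2) (MUL (FAC 3 C3) (MUL (FAC 4 C4)
  (MUL (FAC 5 C5) (MUL (FAC 6 C6) (MUL (FAC 7 C7) (MUL (FAC 8 C8) (MUL (FAC 9 C9)
  (MUL (FAC 10 C10) (MUL (FAC 11 C11) (MUL (FAC 12 C12) (FAC 13 C13)))))))))))))"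

definition NS :: "(nat \<Rightarrow> nat) \<Rightarrow> nat list \<Rightarrow> nat \<Rightarrow> nat \<Rightarrow> nat \<Rightarrow> nat \<Rightarrow> nat \<Rightarrow> nat \<Rightarrow> nat \<Rightarrow> nat \<Rightarrow> nat \<Rightarrow> nat \<Rightarrow> bool" where
  "NS g es k oo e x y r q h pa pb \<longleftrightarrow>
    (r = 0 \<and> k = 0 \<and> e = 9 * q \<and> y = 0) \<or>
    (r = 1 \<and> k = 0 \<and> e = 1 + 9 * q \<and> y = Suc x) \<or>
    (r = 2 \<and> k = 0 \<and> e = 2 + 9 * q \<and> y = fst (prod_decode x)) \<or>
    (r = 3 \<and> k = 0 \<and> e = 3 + 9 * q \<and> y = snd (prod_decode x)) \<or>
    (r = 4 \<and> k = 0 \<and> e = 4 + 9 * q \<and> oo = 0 \<and> y = g (Suc (x + x))) \<or>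
    (r = 5 \<and> k = 0 \<and> e = 4 + 9 * q \<and> oo \<noteq> 0 \<and> x = h + h \<and>
       ptr es pa (mkJ 0 (fst (prod_decode (fst (prod_decode (oo - 1))))) (snd (prod_decode (fst (prod_decode (oo - 1))))) h y)) \<or>
    (r = 6 \<and> k = 0 \<and> e = 4 + 9 * q \<and> oo \<noteq> 0 \<and> x = Suc (h + h) \<and>
       ptr es pa (mkJ 0 (fst (prod_decode (snd (prod_decode (oo - 1))))) (snd (prod_decode (snd (prod_decode (oo - 1))))) h y)) \<or>
    (r = 7 \<and> k = 0 \<and> e = 5 + 9 * q \<and> ptr es pa (mkJ 0 oo (snd (prod_decode q)) x h) \<and>
       ptr es pb (mkJ 0 oo (fst (prod_decode q)) h y)) \<or>
    (r = 8 \<and> k = 0 \<and> e = 6 + 9 * q \<and> ptr es pa (mkJ 0 oo (fst (prod_decode q)) x (fst (prod_decode y))) \<and>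
       ptr es pb (mkJ 0 oo (snd (prod_decode q)) x (snd (prod_decode y)))) \<or>
    (r = 9 \<and> k = 0 \<and> e = 7 + 9 * q \<and> fst (prod_decode x) = 0 \<and>
       ptr es pa (mkJ 0 oo (fst (prod_decode q)) (snd (prod_decode x)) y)) \<or>
    (r = 10 \<and> k = 0 \<and> e = 7 + 9 * q \<and> fst (prod_decode x) \<noteq> 0 \<and>
       ptr es pa (mkJ 0 oo e (prod_encode (fst (prod_decode x) - 1, snd (prod_decode x))) h) \<and>
       ptr es pb (mkJ 0 oo (snd (prod_decode q))
          (prod_encode (fst (prod_decode x) - 1, prod_encode (h, snd (prod_decode x)))) y)) \<or>
    (r = 11 \<and> k = 0 \<and> e = 8 + 9 * q \<and> ptr es pa (mkJ 0 oo q (prod_encode (y, x)) 0) \<and>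
       ptr es pb (mkJ 1 oo q x y)) \<or>
    (r = 12 \<and> k = 1 \<and> y = 0) \<or>
    (r = 13 \<and> k = 1 \<and> y \<noteq> 0 \<and> h \<noteq> 0 \<and> ptr es pa (mkJ 1 oo e x (y - 1)) \<and>
       ptr es pb (mkJ 0 oo e (prod_encode (y - 1, x)) h))"

lemma NODEOK_iff:
  "eval g NODEOK (inp k oo e x y r q h pa pb (encl es)) = 0 \<longleftrightarrow> NS g es k oo e x y r q h pa pb"
  unfolding NODEOK_def FAC_def C0_def C1_def C2_def C3_def C4_def C5_def C6_def C7_def C8_def C9_def
    C10_def C11_def C12_def C13_def TT_def NS_def
  by (simp add: mult_is_0)



lemma fst_decode_le: "fst (prod_decode n) \<le> n"
  by (metis le_prod_encode_1 prod.collapse prod_decode_inverse)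
lemma snd_decode_le: "snd (prod_decode n) \<le> n"
  by (metis le_prod_encode_2 prod.collapse prod_decode_inverse)

function Ora :: "nat set \<Rightarrow> nat \<Rightarrow> nat \<Rightarrow> nat option" where
  "Ora X 0 = chi X"
| "Ora X (Suc t) = join (Phi (snd (prod_decode (fst (prod_decode t)))) (Ora X (fst (prod_decode (fst (prod_decode t))))))
                        (Phi (snd (prod_decode (snd (prod_decode t)))) (Ora X (fst (prod_decode (snd (prod_decode t))))))"
  by pat_completeness auto
termination
proof (relation "measure (\<lambda>(X, t). t)")
  fix X t
  show "((X, fst (prod_decode (fst (prod_decode t)))), X, Suc t) \<in> measure (\<lambda>(X, t). t)"
    using fst_decode_le[of "fst (prod_decode t)"] fst_decode_le[of t] by simp
  show "((X, fst (prod_decode (snd (prod_decode t)))), X, Suc t) \<in> measure (\<lambda>(X, t). t)"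
    using fst_decode_le[of "snd (prod_decode t)"] snd_decode_le[of t] by simp
qed auto

definition holds :: "nat set \<Rightarrow> nat \<Rightarrow> bool" where
  "holds X J = (case prod_decode J of (k, r1) \<Rightarrow> case prod_decode r1 of (oo, r2) \<Rightarrow>
     case prod_decode r2 of (e, r3) \<Rightarrow> case prod_decode r3 of (x, y) \<Rightarrow>
     (k = 0 \<and> Defs.comp (Ora X oo) e x y) \<or>
     (k = 1 \<and> (\<forall>j<y. \<exists>v>0. Defs.comp (Ora X oo) e (prod_encode (j, x)) v)))"

lemma holds_mkJ[simp]: "holds X (mkJ k oo e x y) \<longleftrightarrow>
     (k = 0 \<and> Defs.comp (Ora X oo) e x y) \<or>
     (k = 1 \<and> (\<forall>j<y. \<exists>v>0. Defs.comp (Ora X oo) e (prod_encode (j, x)) v))"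
  by (simp add: holds_def mkJ_def)

lemma Phi_of_comp: "Defs.comp Or e x y \<Longrightarrow> Phi e Or x = Some y"
  unfolding Phi_def using comp_det by (auto intro!: the_equality)
lemma comp_of_Phi: assumes "Phi e Or x = Some y" shows "Defs.comp Or e x y"
proof -
  from assms obtain z where z: "Defs.comp Or e x z" and y: "y = (THE y. Defs.comp Or e x y)"
    by (auto simp: Phi_def split: if_splits)
  have "(THE y. Defs.comp Or e x y) = z" using z comp_det by (intro the_equality) blast+
  then show ?thesis using z y by simp
qed

lemma ptr_holds: "ptr es p J \<Longrightarrow> (\<And>i. i < length es \<Longrightarrow> holds X (fst (prod_decode (es ! i)))) \<Longrightarrow> holds X J"
  unfolding ptr_def by auto

lemma mod9: "r < 9 \<Longrightarrow> (r + 9 * n) mod 9 = (r::nat)" by simp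

lemma mod_eq: "e = r + 9 * q \<Longrightarrow> r < 9 \<Longrightarrow> e mod 9 = r \<and> e div 9 = (q::nat)" by simp

lemma NS_sound:
  assumes gX: "\<And>u. g (Suc (u + u)) = (if u \<in> X then 1 else 0)"
    and N: "NS g es k oo e x y r q h pa pb"
    and H: "\<And>i. i < length es \<Longrightarrow> holds X (fst (prod_decode (es ! i)))"
  shows "holds X (mkJ k oo e x y)"
proof -
  note P = ptr_holds[OF _ H]
  from N show ?thesis unfolding NS_def
  proof (elim disjE conjE)
    assume "r = 0" "k = 0" "e = 9 * q" "y = 0"
    then show ?thesis by (simp add: c_zero)
  next
    assume "r = 1" "k = 0" "e = 1 + 9 * q" "y = Suc x"
    then show ?thesis by (simp add: c_succ)
  next
    assume a: "r = 2" "k = 0" "e = 2 + 9 * q" "y = fst (prod_decode x)"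
    have m: "e mod 9 = 2" by (subst a(3), rule mod9) simp
    show ?thesis using c_fst[OF m, of "Ora X oo" x] a(2,4) by simp
  next
    assume a: "r = 3" "k = 0" "e = 3 + 9 * q" "y = snd (prod_decode x)"
    have m: "e mod 9 = 3" by (subst a(3), rule mod9) simp
    show ?thesis using c_snd[OF m, of "Ora X oo" x] a(2,4) by simp
  next
    assume "r = 4" "k = 0" "e = 4 + 9 * q" "oo = 0" "y = g (Suc (x + x))"
    then show ?thesis using gX[of x] by (auto intro!: c_orc simp: chi_def)
  next
    let ?t = "oo - 1"
    assume a: "r = 5" "k = 0" "e = 4 + 9 * q" "oo \<noteq> 0" "x = h + h"
      "ptr es pa (mkJ 0 (fst (prod_decode (fst (prod_decode (oo - 1))))) (snd (prod_decode (fst (prod_decode (oo - 1))))) h y)"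
    obtain t where t: "oo = Suc t" using a(4) by (cases oo) auto
    from P[OF a(6)] have "Phi (snd (prod_decode (fst (prod_decode t)))) (Ora X (fst (prod_decode (fst (prod_decode t))))) h = Some y"
      by (simp add: Phi_of_comp t)
    then have "Ora X oo x = Some y" by (simp add: t a(5) join_def)
    then show ?thesis using a by (auto intro!: c_orc)
  next
    let ?t = "oo - 1"
    assume a: "r = 6" "k = 0" "e = 4 + 9 * q" "oo \<noteq> 0" "x = Suc (h + h)"
      "ptr es pa (mkJ 0 (fst (prod_decode (snd (prod_decode (oo - 1))))) (snd (prod_decode (snd (prod_decode (oo - 1))))) h y)"
    obtain t where t: "oo = Suc t" using a(4) by (cases oo) auto
    from P[OF a(6)] have "Phi (snd (prod_decode (snd (prod_decode t)))) (Ora X (fst (prod_decode (snd (prod_decode t))))) h = Some y"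
      by (simp add: Phi_of_comp t)
    then have "Ora X oo x = Some y" by (simp add: t a(5) join_def)
    then show ?thesis using a by (auto intro!: c_orc)
  next
    assume a: "r = 7" "k = 0" "e = 5 + 9 * q" "ptr es pa (mkJ 0 oo (snd (prod_decode q)) x h)"
       "ptr es pb (mkJ 0 oo (fst (prod_decode q)) h y)"
    have m: "e mod 9 = 5" "prod_decode (e div 9) = (fst (prod_decode q), snd (prod_decode q))"
      using mod_eq[OF a(3)] by simp_all
    have "Defs.comp (Ora X oo) e x y"
      by (rule c_comp[OF m]) (use P[OF a(4)] P[OF a(5)] in auto)
    then show ?thesis using a(2) by simp
  next
    assume a: "r = 8" "k = 0" "e = 6 + 9 * q" "ptr es pa (mkJ 0 oo (fst (prod_decode q)) x (fst (prod_decode y)))"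
       "ptr es pb (mkJ 0 oo (snd (prod_decode q)) x (snd (prod_decode y)))"
    have m: "e mod 9 = 6" "prod_decode (e div 9) = (fst (prod_decode q), snd (prod_decode q))"
      using mod_eq[OF a(3)] by simp_all
    have "Defs.comp (Ora X oo) e x (prod_encode (fst (prod_decode y), snd (prod_decode y)))"
      by (rule c_pair[OF m]) (use P[OF a(4)] P[OF a(5)] in auto)
    then show ?thesis using a by simp
  next
    assume a: "r = 9" "k = 0" "e = 7 + 9 * q" "fst (prod_decode x) = 0"
       "ptr es pa (mkJ 0 oo (fst (prod_decode q)) (snd (prod_decode x)) y)"
    have d: "prod_decode x = (0, snd (prod_decode x))" using a(4) by (metis prod.collapse)
    have m: "e mod 9 = 7" "prod_decode (e div 9) = (fst (prod_decode q), snd (prod_decode q))"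
      using mod_eq[OF a(3)] by simp_all
    have "Defs.comp (Ora X oo) e x y"
      by (rule c_prim0[OF m d]) (use P[OF a(5)] in auto)
    then show ?thesis using a(2) by simp
  next
    assume a: "r = 10" "k = 0" "e = 7 + 9 * q" "fst (prod_decode x) \<noteq> 0"
       "ptr es pa (mkJ 0 oo e (prod_encode (fst (prod_decode x) - 1, snd (prod_decode x))) h)"
       "ptr es pb (mkJ 0 oo (snd (prod_decode q))
          (prod_encode (fst (prod_decode x) - 1, prod_encode (h, snd (prod_decode x)))) y)"
    have d: "prod_decode x = (Suc (fst (prod_decode x) - 1), snd (prod_decode x))" using a(4)
      by (metis Suc_pred' neq0_conv prod.collapse)
    have m: "e mod 9 = 7" "prod_decode (e div 9) = (fst (prod_decode q), snd (prod_decode q))"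
      using mod_eq[OF a(3)] by simp_all
    have "Defs.comp (Ora X oo) e x y"
      by (rule c_primS[OF m d]) (use P[OF a(5)] P[OF a(6)] in auto)
    then show ?thesis using a(2) by simp
  next
    assume a: "r = 11" "k = 0" "e = 8 + 9 * q" "ptr es pa (mkJ 0 oo q (prod_encode (y, x)) 0)"
       "ptr es pb (mkJ 1 oo q x y)"
    have m: "e mod 9 = 8" "e div 9 = q"
      using mod_eq[OF a(3)] by simp_all
    have "Defs.comp (Ora X oo) e x y"
      by (rule c_mu[OF m(1)]) (use P[OF a(4)] P[OF a(5)] m(2) in auto)
    then show ?thesis using a(2) by simp
  next
    assume "r = 12" "k = 1" "y = 0"
    then show ?thesis by simp
  next
    assume a: "r = 13" "k = 1" "y \<noteq> 0" "h \<noteq> 0" "ptr es pa (mkJ 1 oo e x (y - 1))"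
       "ptr es pb (mkJ 0 oo e (prod_encode (y - 1, x)) h)"
    from P[OF a(5)] P[OF a(6)] have
      A: "\<forall>j<y - 1. \<exists>v>0. Defs.comp (Ora X oo) e (prod_encode (j, x)) v"
      and B: "Defs.comp (Ora X oo) e (prod_encode (y - 1, x)) h" by auto
    have "\<forall>j<y. \<exists>v>0. Defs.comp (Ora X oo) e (prod_encode (j, x)) v"
    proof (intro allI impI)
      fix j assume "j < y"
      then have "j < y - 1 \<or> j = y - 1" by auto
      then show "\<exists>v>0. Defs.comp (Ora X oo) e (prod_encode (j, x)) v"
        using A B a(4) by auto
    qed
    then show ?thesis using a by simp
  qed
qed



definition "nodeok g nd es \<longleftrightarrow> eval g NODEOK (prod_encode (nd, encl es)) = 0"
definition "valid g xs \<longleftrightarrow> (\<forall>i<length xs. nodeok g (xs ! i) (drop (Suc i) xs))"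
definition "has xs J \<longleftrightarrow> (\<exists>i. ptr xs i J)"

lemma valid_Nil[simp]: "valid g []" by (simp add: valid_def)
lemma valid_Cons: "valid g (a # xs) \<longleftrightarrow> nodeok g a xs \<and> valid g xs"
  by (auto simp: valid_def nth_Cons split: nat.splits)

lemma mkJ_surj: "\<exists>k oo e x y. J = mkJ k oo e x y"
  unfolding mkJ_def by (metis prod.collapse prod_decode_inverse)
lemma mkH_surj: "\<exists>r q h pa pb. H = mkH r q h pa pb"
  unfolding mkH_def by (metis prod.collapse prod_decode_inverse)
lemma nd_surj: obtains k oo e x y r q h pa pb where "nd = prod_encode (mkJ k oo e x y, mkH r q h pa pb)"
proof -
  obtain J H where "nd = prod_encode (J, H)" by (metis prod.collapse prod_decode_inverse)
  then show ?thesis using mkJ_surj[of J] mkH_surj[of H] that by blast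
qed

lemma nodeok_iff: "nodeok g (prod_encode (mkJ k oo e x y, mkH r q h pa pb)) es \<longleftrightarrow> NS g es k oo e x y r q h pa pb"
  by (simp add: nodeok_def NODEOK_iff)

lemma NS_mono: "NS g zs k oo e x y r q h pa pb \<Longrightarrow> NS g (zs @ ys) k oo e x y r q h pa pb"
  unfolding NS_def by (elim disjE conjE; simp add: ptr_app1)

lemma nodeok_mono: "nodeok g nd zs \<Longrightarrow> nodeok g nd (zs @ ys)"
  by (cases nd rule: nd_surj) (simp add: nodeok_iff NS_mono)

lemma valid_append: "valid g xs \<Longrightarrow> valid g ys \<Longrightarrow> valid g (xs @ ys)"
  by (induction xs) (auto simp: valid_Cons nodeok_mono)

lemma valid_sound:
  assumes gX: "\<And>u. g (Suc (u + u)) = (if u \<in> X then 1 else 0)"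
  shows "valid g xs \<Longrightarrow> i < length xs \<Longrightarrow> holds X (fst (prod_decode (xs ! i)))"
proof (induction xs arbitrary: i)
  case Nil then show ?case by simp
next
  case (Cons a xs)
  then have v: "valid g xs" and n: "nodeok g a xs" by (auto simp: valid_Cons)
  have H: "\<And>i. i < length xs \<Longrightarrow> holds X (fst (prod_decode (xs ! i)))" using Cons.IH v by blast
  have "holds X (fst (prod_decode a))"
  proof (cases a rule: nd_surj)
    case (1 k oo e x y r q h pa pb)
    then show ?thesis using NS_sound[OF gX _ H] n by (simp add: nodeok_iff)
  qed
  then show ?case using Cons.prems H by (cases i) auto
qed

lemma has_app1: "has xs J \<Longrightarrow> has (xs @ ys) J" by (auto simp: has_def intro: ptr_app1)
lemma has_app2: "has ys J \<Longrightarrow> has (xs @ ys) J" by (auto simp: has_def intro: ptr_app2)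

lemma mk_node:
  assumes "valid g xs" "NS g xs k oo e x y r q h pa pb"
  shows "valid g (prod_encode (mkJ k oo e x y, mkH r q h pa pb) # xs) \<and>
         has (prod_encode (mkJ k oo e x y, mkH r q h pa pb) # xs) (mkJ k oo e x y)"
  using assms by (auto simp: valid_Cons nodeok_iff has_def ptr_def intro!: exI[of _ 0])

lemma ptr_cons': "ptr xs i J \<Longrightarrow> ptr (a # xs) (Suc i) J" by (auto simp: ptr_def)



lemma combine2:
  assumes "valid g xs1" "has xs1 J1" "valid g xs2" "has xs2 J2"
  shows "\<exists>i1 i2. valid g (xs1 @ xs2) \<and> ptr (xs1 @ xs2) i1 J1 \<and> ptr (xs1 @ xs2) i2 J2"
  using assms valid_append ptr_app1 ptr_app2 unfolding has_def by blast

lemma ediv: "(e::nat) mod 9 = r \<Longrightarrow> e = r + 9 * (e div 9)" by (metis mod_mult_div_eq)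

lemma NS_r11: "e = 8 + 9 * q \<Longrightarrow> ptr es pa (mkJ 0 oo q (prod_encode (y, x)) 0) \<Longrightarrow>
  ptr es pb (mkJ 1 oo q x y) \<Longrightarrow> NS g es 0 oo e x y 11 q h pa pb"
  by (simp add: NS_def)

lemma node_exists:
  assumes "valid g xs" "NS g xs k oo e x y r q h pa pb"
  shows "\<exists>xs. valid g xs \<and> has xs (mkJ k oo e x y)"
  using mk_node[OF assms] by blast

lemma complete:
  assumes gX: "\<And>u. g (Suc (u + u)) = (if u \<in> X then 1 else 0)"
  shows "Defs.comp (Ora X oo) e x y \<Longrightarrow> \<exists>xs. valid g xs \<and> has xs (mkJ 0 oo e x y)"
proof (induction oo arbitrary: e x y rule: less_induct)
  case (less oo)
  from less.prems show ?case
  proof (induction rule: comp.induct)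
    case (c_zero e x)
    obtain q where E: "e = 0 + 9 * q" using ediv[OF c_zero] by blast
    show ?case
      by (intro node_exists[OF valid_Nil, where r=0 and q=q and h=0 and pa=0 and pb=0])
         (simp add: NS_def E)
  next
    case (c_succ e x)
    obtain q where E: "e = 1 + 9 * q" using ediv[OF c_succ] by blast
    show ?case
      by (intro node_exists[OF valid_Nil, where r=1 and q=q and h=0 and pa=0 and pb=0])
         (simp add: NS_def E)
  next
    case (c_fst e x)
    obtain q where E: "e = 2 + 9 * q" using ediv[OF c_fst] by blast
    show ?case
      by (intro node_exists[OF valid_Nil, where r=2 and q=q and h=0 and pa=0 and pb=0])
         (simp add: NS_def E)
  next
    case (c_snd e x)
    obtain q where E: "e = 3 + 9 * q" using ediv[OF c_snd] by blast
    show ?case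
      by (intro node_exists[OF valid_Nil, where r=3 and q=q and h=0 and pa=0 and pb=0])
         (simp add: NS_def E)
  next
    case (c_orc e x y)
    obtain q where E: "e = 4 + 9 * q" using ediv[OF c_orc(1)] by blast
    show ?case
    proof (cases oo)
      case 0
      then have "y = g (Suc (x + x))" using c_orc(2) gX[of x] by (auto simp: chi_def)
      then show ?thesis using 0
        by (intro node_exists[OF valid_Nil, where r=4 and q=q and h=0 and pa=0 and pb=0])
           (simp add: NS_def E)
    next
      case (Suc t)
      let ?o1 = "fst (prod_decode (fst (prod_decode t)))"
      let ?e1 = "snd (prod_decode (fst (prod_decode t)))"
      let ?o2 = "fst (prod_decode (snd (prod_decode t)))"
      let ?e2 = "snd (prod_decode (snd (prod_decode t)))"
      have lt1: "?o1 < oo" using Suc fst_decode_le[of "fst (prod_decode t)"] fst_decode_le[of t] by simp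
      have lt2: "?o2 < oo" using Suc fst_decode_le[of "snd (prod_decode t)"] snd_decode_le[of t] by simp
      show ?thesis
      proof (cases "even x")
        case True
        then have xh: "x = x div 2 + x div 2" by auto
        have "Phi ?e1 (Ora X ?o1) (x div 2) = Some y" using c_orc(2) True Suc by (simp add: join_def)
        then have "Defs.comp (Ora X ?o1) ?e1 (x div 2) y" by (rule comp_of_Phi)
        then obtain xs where xs: "valid g xs" "has xs (mkJ 0 ?o1 ?e1 (x div 2) y)"
          using less.IH[OF lt1] by blast
        then obtain i where i: "ptr xs i (mkJ 0 ?o1 ?e1 (x div 2) y)" by (auto simp: has_def)
        show ?thesis
          by (rule node_exists[OF xs(1), where r=5 and q=q and h="x div 2" and pa=i and pb=0])
             (use i Suc xh in \<open>simp add: NS_def E\<close>)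
      next
        case False
        then have xh: "x = Suc (x div 2 + x div 2)" by presburger
        have "Phi ?e2 (Ora X ?o2) (x div 2) = Some y" using c_orc(2) False Suc by (simp add: join_def)
        then have "Defs.comp (Ora X ?o2) ?e2 (x div 2) y" by (rule comp_of_Phi)
        then obtain xs where xs: "valid g xs" "has xs (mkJ 0 ?o2 ?e2 (x div 2) y)"
          using less.IH[OF lt2] by blast
        then obtain i where i: "ptr xs i (mkJ 0 ?o2 ?e2 (x div 2) y)" by (auto simp: has_def)
        show ?thesis
          by (rule node_exists[OF xs(1), where r=6 and q=q and h="x div 2" and pa=i and pb=0])
             (use i Suc xh in \<open>simp add: NS_def E\<close>)
      qed
    qed
  next
    case (c_comp e a b x z y)
    obtain xs1 where 1: "valid g xs1" "has xs1 (mkJ 0 oo b x z)" using c_comp.IH(1) by blast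
    obtain xs2 where 2: "valid g xs2" "has xs2 (mkJ 0 oo a z y)" using c_comp.IH(2) by blast
    obtain i1 i2 where v: "valid g (xs1 @ xs2)" "ptr (xs1 @ xs2) i1 (mkJ 0 oo b x z)"
        "ptr (xs1 @ xs2) i2 (mkJ 0 oo a z y)" using combine2[OF 1 2] by blast
    obtain q where E: "e = 5 + 9 * q" using ediv[OF c_comp.hyps(1)] by blast
    show ?case
      by (rule node_exists[OF v(1), where r=7 and q=q and h=z and pa=i1 and pb=i2])
         (use v c_comp.hyps(2) in \<open>simp add: NS_def E\<close>)
  next
    case (c_pair e a b x y1 y2)
    obtain xs1 where 1: "valid g xs1" "has xs1 (mkJ 0 oo a x y1)" using c_pair.IH(1) by blast
    obtain xs2 where 2: "valid g xs2" "has xs2 (mkJ 0 oo b x y2)" using c_pair.IH(2) by blast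
    obtain i1 i2 where v: "valid g (xs1 @ xs2)" "ptr (xs1 @ xs2) i1 (mkJ 0 oo a x y1)"
        "ptr (xs1 @ xs2) i2 (mkJ 0 oo b x y2)" using combine2[OF 1 2] by blast
    obtain q where E: "e = 6 + 9 * q" using ediv[OF c_pair.hyps(1)] by blast
    show ?case
      by (rule node_exists[OF v(1), where r=8 and q=q and h=0 and pa=i1 and pb=i2])
         (use v c_pair.hyps(2) in \<open>simp add: NS_def E\<close>)
  next
    case (c_prim0 e a b x w y)
    obtain xs1 where 1: "valid g xs1" "has xs1 (mkJ 0 oo a w y)" using c_prim0.IH by blast
    then obtain i1 where i: "ptr xs1 i1 (mkJ 0 oo a w y)" by (auto simp: has_def)
    obtain q where E: "e = 7 + 9 * q" using ediv[OF c_prim0.hyps(1)] by blast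
    show ?case
      by (rule node_exists[OF 1(1), where r=9 and q=q and h=0 and pa=i1 and pb=0])
         (use i c_prim0.hyps(2,3) in \<open>simp add: NS_def E\<close>)
  next
    case (c_primS e a b x k w z y)
    obtain xs1 where 1: "valid g xs1" "has xs1 (mkJ 0 oo e (prod_encode (k, w)) z)" using c_primS.IH(1) by blast
    obtain xs2 where 2: "valid g xs2" "has xs2 (mkJ 0 oo b (prod_encode (k, prod_encode (z, w))) y)"
      using c_primS.IH(2) by blast
    obtain i1 i2 where v: "valid g (xs1 @ xs2)" "ptr (xs1 @ xs2) i1 (mkJ 0 oo e (prod_encode (k, w)) z)"
        "ptr (xs1 @ xs2) i2 (mkJ 0 oo b (prod_encode (k, prod_encode (z, w))) y)" using combine2[OF 1 2] by blast
    obtain q where E: "e = 7 + 9 * q" using ediv[OF c_primS.hyps(1)] by blast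
    have N: "NS g (xs1 @ xs2) 0 oo e x y 10 q z i1 i2"
      unfolding NS_def using v c_primS.hyps(2,3) E by simp
    show ?case by (rule node_exists[OF v(1) N])
  next
    case (c_mu e k x)
    let ?q = "e div 9"
    have M: "j \<le> k \<Longrightarrow> \<exists>xs. valid g xs \<and> has xs (mkJ 1 oo ?q x j)" for j
    proof (induction j)
      case 0
      show ?case
        by (rule node_exists[OF valid_Nil, where r=12 and q=0 and h=0 and pa=0 and pb=0])
           (simp add: NS_def)
    next
      case (Suc j)
      obtain xs1 where 1: "valid g xs1" "has xs1 (mkJ 1 oo ?q x j)" using Suc by auto
      obtain v xs2 where "0 < v" and 2: "valid g xs2" "has xs2 (mkJ 0 oo ?q (prod_encode (j, x)) v)"
        using c_mu.IH(2) Suc.prems by (meson Suc_le_lessD)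
      obtain i1 i2 where vv: "valid g (xs1 @ xs2)" "ptr (xs1 @ xs2) i1 (mkJ 1 oo ?q x j)"
        "ptr (xs1 @ xs2) i2 (mkJ 0 oo ?q (prod_encode (j, x)) v)" using combine2[OF 1 2] by blast
      have N: "NS g (xs1 @ xs2) 1 oo ?q x (Suc j) 13 0 v i1 i2"
        unfolding NS_def using vv \<open>0 < v\<close> by simp
      show ?case by (rule node_exists[OF vv(1) N])
    qed
    obtain xs1 where 1: "valid g xs1" "has xs1 (mkJ 0 oo ?q (prod_encode (k, x)) 0)" using c_mu.IH(1) by blast
    obtain xs2 where 2: "valid g xs2" "has xs2 (mkJ 1 oo ?q x k)" using M[of k] by blast
    obtain i1 i2 where vv: "valid g (xs1 @ xs2)" "ptr (xs1 @ xs2) i1 (mkJ 0 oo ?q (prod_encode (k, x)) 0)"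
        "ptr (xs1 @ xs2) i2 (mkJ 1 oo ?q x k)" using combine2[OF 1 2] by blast
    have E: "e = 8 + 9 * ?q" using ediv[OF c_mu.hyps(1)] .
    have N: "NS g (xs1 @ xs2) 0 oo e x k 11 ?q 0 i1 i2"
      using NS_r11[OF E vv(2,3)] .
    show ?case by (rule node_exists[OF vv(1) N])
  qed
qed



definition "Vf g n = (if n = 0 then 0 else 1) * eval g NODEOK (prod_encode (hdf n, tlf n))"

definition "VALA a = MUL (SG a) (CMP NODEOK (PAIR (CMP HDp a) (CMP TLp a)))"
lemma eval_VALA[simp]: "eval g (VALA a) x = Vf g (eval g a x)"
  by (simp add: VALA_def Vf_def)

definition "stepV = PAIR (CMP TLp Fp) (ADD Sn (VALA Fp))"
lemma eval_stepV: "eval g stepV (prod_encode (n, a)) = prod_encode (tlf n, a + Vf g n)"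
  by (simp add: stepV_def)

lemma iter_stepV:
  "(eval g stepV ^^ i) (prod_encode (encl xs, a)) = prod_encode (encl (drop i xs), a + (\<Sum>t<i. Vf g (encl (drop t xs))))"
proof (induction i)
  case 0 then show ?case by simp
next
  case (Suc i)
  have "tlf (encl (drop i xs)) = encl (drop (Suc i) xs)" by (simp add: drop_Suc tl_drop)
  then show ?case using Suc by (simp add: eval_stepV)
qed

definition "VALIDP = P2 (ITER stepV (Cp Sp idp) (PAIR idp (constp 0)))"

lemma length_le_encl: "length xs \<le> encl xs"
proof (induction xs)
  case Nil then show ?case by simp
next
  case (Cons a xs)
  then show ?case using le_prod_encode_2[of "encl xs" a] by simp
qed

lemma Vf_drop: "t < length xs \<Longrightarrow> Vf g (encl (drop t xs)) = 0 \<longleftrightarrow> nodeok g (xs ! t) (drop (Suc t) xs)"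
proof -
  assume t: "t < length xs"
  then have ne: "drop t xs \<noteq> []" by simp
  have "hd (drop t xs) = xs ! t" using t by (simp add: hd_drop_conv_nth)
  moreover have "tl (drop t xs) = drop (Suc t) xs" by (simp add: drop_Suc tl_drop)
  ultimately show ?thesis using ne by (simp add: Vf_def nodeok_def)
qed

lemma Vf_big: "length xs \<le> t \<Longrightarrow> Vf g (encl (drop t xs)) = 0"
  by (simp add: Vf_def)

lemma eval_VALIDP: "eval g VALIDP L = 0 \<longleftrightarrow> valid g (decl L)"
proof -
  define xs where "xs = decl L"
  have L: "L = encl xs" by (simp add: xs_def)
  have S: "eval g VALIDP L = (\<Sum>t<Suc L. Vf g (encl (drop t xs)))"
    by (simp add: VALIDP_def L iter_stepV del: funpow.simps)
  have A: "(\<Sum>t<Suc L. Vf g (encl (drop t xs))) = 0 \<longleftrightarrow> (\<forall>t<Suc L. Vf g (encl (drop t xs)) = 0)"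
    by (subst sum_eq_0_iff) auto
  have B: "(\<forall>t<Suc L. Vf g (encl (drop t xs)) = 0) \<longleftrightarrow> (\<forall>t<length xs. nodeok g (xs ! t) (drop (Suc t) xs))"
  proof
    assume H: "\<forall>t<Suc L. Vf g (encl (drop t xs)) = 0"
    show "\<forall>t<length xs. nodeok g (xs ! t) (drop (Suc t) xs)"
    proof (intro allI impI)
      fix t assume t: "t < length xs"
      then have "t < Suc L" using length_le_encl[of xs] L by simp
      then have "Vf g (encl (drop t xs)) = 0" using H by blast
      then show "nodeok g (xs ! t) (drop (Suc t) xs)" using Vf_drop[OF t] by simp
    qed
  next
    assume H: "\<forall>t<length xs. nodeok g (xs ! t) (drop (Suc t) xs)"
    show "\<forall>t<Suc L. Vf g (encl (drop t xs)) = 0"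
    proof (intro allI impI)
      fix t assume "t < Suc L"
      show "Vf g (encl (drop t xs)) = 0"
      proof (cases "t < length xs")
        case True
        then have "nodeok g (xs ! t) (drop (Suc t) xs)" using H by blast
        then show ?thesis using Vf_drop[OF True] by simp
      next
        case False then show ?thesis by (simp add: Vf_def)
      qed
    qed
  qed
  show ?thesis using S A B by (simp add: valid_def xs_def)
qed



primrec sqf :: "nat \<Rightarrow> nat \<Rightarrow> nat \<Rightarrow> nat \<Rightarrow> nat \<times> nat" where
  "sqf pN eN pc0 0 = (0, pc0)"
| "sqf pN eN pc0 (Suc n) = (Suc (prod_encode (prod_encode (0, pN), prod_encode (sqf pN eN pc0 n))), eN)"

definition "finf pN eN pc0 pz n = Suc (prod_encode (prod_encode (sqf pN eN pc0 n), prod_encode (0, pz)))"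

definition "stepQ pN eN = PAIR (Cp Sp (PAIR (constp (prod_encode (0, pN))) idp)) (constp eN)"
lemma eval_stepQ: "eval g (stepQ pN eN) (prod_encode p) =
   prod_encode (Suc (prod_encode (prod_encode (0, pN), prod_encode p)), eN)"
  by (simp add: stepQ_def)

lemma iter_stepQ: "(eval g (stepQ pN eN) ^^ n) (prod_encode (0, pc0)) = prod_encode (sqf pN eN pc0 n)"
  by (induction n) (simp_all add: eval_stepQ)

definition "SQP pN eN pc0 = ITER (stepQ pN eN) (CMP Op Zp) (constp (prod_encode (0, pc0)))"
lemma eval_SQP[simp]: "eval g (SQP pN eN pc0) x = prod_encode (sqf pN eN pc0 (g 0))"
  by (simp add: SQP_def iter_stepQ del: funpow.simps)

definition "FINP pN eN pc0 pz = Cp Sp (PAIR (SQP pN eN pc0) (constp (prod_encode (0, pz))))"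
lemma eval_FINP[simp]: "eval g (FINP pN eN pc0 pz) x = finf pN eN pc0 pz (g 0)"
  by (simp add: FINP_def finf_def)

definition "cert m v w ef L p1 p2 p3 = prod_encode (m, prod_encode (v, prod_encode (w, prod_encode (ef,
   prod_encode (L, prod_encode (p1, prod_encode (p2, p3)))))))"

definition "Cm = P1 Fp"
definition "Cv = P1 (P2 Fp)"
definition "Cw = P1 (P2 (P2 Fp))"
definition "Cef = P1 (P2 (P2 (P2 Fp)))"
definition "CL = P1 (P2 (P2 (P2 (P2 Fp))))"
definition "Cp1 = P1 (P2 (P2 (P2 (P2 (P2 Fp)))))"
definition "Cp2 = P1 (P2 (P2 (P2 (P2 (P2 (P2 Fp))))))"
definition "Cp3 = P2 (P2 (P2 (P2 (P2 (P2 (P2 Fp))))))"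

lemma eval_cert[simp]:
  "eval g Cm (prod_encode (cert m v w ef L p1 p2 p3, x)) = m"
  "eval g Cv (prod_encode (cert m v w ef L p1 p2 p3, x)) = v"
  "eval g Cw (prod_encode (cert m v w ef L p1 p2 p3, x)) = w"
  "eval g Cef (prod_encode (cert m v w ef L p1 p2 p3, x)) = ef"
  "eval g CL (prod_encode (cert m v w ef L p1 p2 p3, x)) = L"
  "eval g Cp1 (prod_encode (cert m v w ef L p1 p2 p3, x)) = p1"
  "eval g Cp2 (prod_encode (cert m v w ef L p1 p2 p3, x)) = p2"
  "eval g Cp3 (prod_encode (cert m v w ef L p1 p2 p3, x)) = p3"
  by (simp_all add: cert_def Cm_def Cv_def Cw_def Cef_def CL_def Cp1_def Cp2_def Cp3_def)

lemma cert_surj: "\<exists>m v w ef L p1 p2 p3. s = cert m v w ef L p1 p2 p3"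
  unfolding cert_def by (metis prod.collapse prod_decode_inverse)

definition "CHK pN eN pc0 pz pt = ADD (CMP VALIDP CL) (ADD
   (PTR CL Cp1 (MK5 (constp 0) (P1 (SQP pN eN pc0)) (P2 (SQP pN eN pc0)) (constp 0) Cef)) (ADD
   (PTR CL Cp2 (MK5 (constp 0) (FINP pN eN pc0 pz) Cef Cm Cv)) (ADD
   (PTR CL Cp3 (MK5 (constp 0) (constp 0) (constp pt) Cm Cw))
   (NZ (DIST Cv Cw)))))"

lemma CHK_iff:
  "eval g (CHK pN eN pc0 pz pt) (prod_encode (cert m v w ef L p1 p2 p3, x)) = 0 \<longleftrightarrow>
    valid g (decl L) \<and>
    ptr (decl L) p1 (mkJ 0 (fst (sqf pN eN pc0 (g 0))) (snd (sqf pN eN pc0 (g 0))) 0 ef) \<and>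
    ptr (decl L) p2 (mkJ 0 (finf pN eN pc0 pz (g 0)) ef m v) \<and>
    ptr (decl L) p3 (mkJ 0 0 pt m w) \<and> v \<noteq> w"
  by (simp add: CHK_def eval_VALIDP)

definition "dcode c = 5 + 9 * prod_encode (0, 8 + 9 * c)"

lemma comp_mu_iff:
  "Defs.comp (\<lambda>a. Some (g a)) (8 + 9 * code P) x k \<longleftrightarrow>
    eval g P (prod_encode (k, x)) = 0 \<and> (\<forall>j<k. 0 < eval g P (prod_encode (j, x)))"
proof
  assume "Defs.comp (\<lambda>a. Some (g a)) (8 + 9 * code P) x k"
  from compE8[OF this] show "eval g P (prod_encode (k, x)) = 0 \<and> (\<forall>j<k. 0 < eval g P (prod_encode (j, x)))"
    by (auto simp: comp_eval_iff)
next
  assume a: "eval g P (prod_encode (k, x)) = 0 \<and> (\<forall>j<k. 0 < eval g P (prod_encode (j, x)))"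
  show "Defs.comp (\<lambda>a. Some (g a)) (8 + 9 * code P) x k"
    by (rule c_mu) (use a in \<open>auto simp: comp_eval_iff\<close>)
qed

lemma comp_d_iff:
  "Defs.comp (\<lambda>a. Some (g a)) (dcode (code P)) x y \<longleftrightarrow>
    y = 0 \<and> (\<exists>k. Defs.comp (\<lambda>a. Some (g a)) (8 + 9 * code P) x k)"
proof
  assume "Defs.comp (\<lambda>a. Some (g a)) (dcode (code P)) x y"
  from compE5[OF this, of 0 "8 + 9 * code P"] obtain z where
    "Defs.comp (\<lambda>a. Some (g a)) (8 + 9 * code P) x z" "Defs.comp (\<lambda>a. Some (g a)) 0 z y"
    by (auto simp: dcode_def)
  then show "y = 0 \<and> (\<exists>k. Defs.comp (\<lambda>a. Some (g a)) (8 + 9 * code P) x k)"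
    using compE0 by fastforce
next
  assume "y = 0 \<and> (\<exists>k. Defs.comp (\<lambda>a. Some (g a)) (8 + 9 * code P) x k)"
  then obtain k where y: "y = 0" and k: "Defs.comp (\<lambda>a. Some (g a)) (8 + 9 * code P) x k" by blast
  have z: "Defs.comp (\<lambda>a. Some (g a)) 0 k 0" by (simp add: c_zero)
  show "Defs.comp (\<lambda>a. Some (g a)) (dcode (code P)) x y"
    unfolding y dcode_def by (rule c_comp[OF _ _ k z]) simp_all
qed

lemma Phi_d:
  "Phi (dcode (code P)) (\<lambda>a. Some (g a)) x =
    (if \<exists>k. eval g P (prod_encode (k, x)) = 0 then Some 0 else None)"
proof -
  have E: "(\<exists>k. Defs.comp (\<lambda>a. Some (g a)) (8 + 9 * code P) x k) \<longleftrightarrow> (\<exists>k. eval g P (prod_encode (k, x)) = 0)"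
  proof
    assume "\<exists>k. eval g P (prod_encode (k, x)) = 0"
    then obtain k where "eval g P (prod_encode (k, x)) = 0" by blast
    define k0 where "k0 = (LEAST k. eval g P (prod_encode (k, x)) = 0)"
    have "eval g P (prod_encode (k0, x)) = 0" unfolding k0_def
      by (rule LeastI) fact
    moreover have "\<forall>j<k0. 0 < eval g P (prod_encode (j, x))"
      unfolding k0_def using not_less_Least by blast
    ultimately show "\<exists>k. Defs.comp (\<lambda>a. Some (g a)) (8 + 9 * code P) x k"
      by (auto simp: comp_mu_iff)
  qed (auto simp: comp_mu_iff)
  show ?thesis
  proof (cases "\<exists>k. eval g P (prod_encode (k, x)) = 0")
    case True
    then have "Defs.comp (\<lambda>a. Some (g a)) (dcode (code P)) x 0" using E comp_d_iff by blast
    then show ?thesis using True Phi_of_comp by simp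
  next
    case False
    then have "\<not> (\<exists>y. Defs.comp (\<lambda>a. Some (g a)) (dcode (code P)) x y)" using E comp_d_iff by blast
    then show ?thesis using False by (simp add: Phi_def)
  qed
qed



definition "chiv X a = (if a \<in> X then 1 else (0::nat))"

lemma chi_eq: "chi X = (\<lambda>a. Some (chiv X a))" by (rule ext) (simp add: chi_def chiv_def)

lemma Phi_code: "Phi (code p) (\<lambda>a. Some (g a)) = (\<lambda>x. Some (eval g p x))"
  by (rule ext) (rule Phi_of_comp[OF comp_eval])

lemma Phi_code_in: "Phi (code p) (chi X) \<in> B_X X" by (auto simp: B_X_def)

lemma const_in: "(\<lambda>_. Some n) \<in> B_X X"
proof -
  have "Phi (code (constp n)) (chi X) = (\<lambda>_. Some n)" by (simp add: chi_eq Phi_code)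
  then show ?thesis using Phi_code_in by metis
qed

lemma chi_in: "chi X \<in> B_X X"
proof -
  have "Phi (code Op) (chi X) = chi X" unfolding chi_eq Phi_code by simp
  then show ?thesis using Phi_code_in by metis
qed

lemma bot_in: "(\<lambda>_. None) \<in> B_X X"
proof -
  have "\<not> Defs.comp Or 17 x y" for Or x y
  proof
    assume "Defs.comp Or 17 x y"
    from compE8[OF this] have "Defs.comp Or 1 (prod_encode (y, x)) 0" by simp
    from compE1[OF this] show False by simp
  qed
  then have "Phi 17 (chi X) = (\<lambda>_. None)" by (auto simp: Phi_def)
  then show ?thesis by (auto simp: B_X_def)
qed

lemma sub_appI: "app a b = Some c \<Longrightarrow> c \<in> C \<Longrightarrow> sub_app C app a b = Some c"
  by (simp add: sub_app_def)
lemma sub_appD: "sub_app C app a b = Some c \<Longrightarrow> app a b = Some c"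
  by (auto simp: sub_app_def split: option.splits if_splits)

lemma K2D: "K2_app g h = Some r \<Longrightarrow> Phi (g 0) (join (Some \<circ> g) (Some \<circ> h)) = Some \<circ> r"
  by (auto simp: K2_app_def Let_def split: if_splits intro!: ext)

lemma K2_X_D: "r \<in> K2_X X \<Longrightarrow> \<exists>p. Phi p (chi X) = Some \<circ> r"
  by (auto simp: K2_X_def)

lemma Ora_Suc_enc: "Ora X (Suc (prod_encode (prod_encode (o1, e1), prod_encode (o2, e2)))) =
   join (Phi e1 (Ora X o1)) (Phi e2 (Ora X o2))"
  by simp

lemma comp_of_Phi_fun: "Phi e Or = Some \<circ> r \<Longrightarrow> Defs.comp Or e x (r x)"
  by (rule comp_of_Phi) (simp add: fun_eq_iff)

lemma Phi_fun_det: "Phi e Or = Some \<circ> r \<Longrightarrow> Defs.comp Or e x y \<Longrightarrow> y = r x"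
  using Phi_of_comp by (metis comp_apply option.inject)



theorem corollary6p16:
  fixes X :: "nat set"
  shows "\<not> (\<exists>f. pca_embedding (B_X X) (sub_app (B_X X) B_app)
                            (K2_X X) (sub_app (K2_X X) K2_app) f)"
proof
  assume "\<exists>f. pca_embedding (B_X X) (sub_app (B_X X) B_app) (K2_X X) (sub_app (K2_X X) K2_app) f"
  then obtain f where emb: "pca_embedding (B_X X) (sub_app (B_X X) B_app) (K2_X X) (sub_app (K2_X X) K2_app) f"
    by blast
  have inj: "inj_on f (B_X X)" and img: "f ` B_X X \<subseteq> K2_X X" using emb by (auto simp: pca_embedding_def)
  have app: "K2_app (f a) (f b) = Some (f c)"
    if "a \<in> B_X X" "b \<in> B_X X" "B_app a b = Some c" "c \<in> B_X X" for a b c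
  proof -
    have "sub_app (B_X X) B_app a b = Some c" using that by (simp add: sub_appI)
    then have "sub_app (K2_X X) K2_app (f a) (f b) = Some (f c)"
      using emb that unfolding pca_embedding_def by blast
    then show ?thesis by (rule sub_appD)
  qed
  have fK: "\<exists>p. Phi p (chi X) = Some \<circ> f a" if "a \<in> B_X X" for a
    using img that K2_X_D by blast

  define cst where "cst n = (\<lambda>_::nat. Some n)" for n :: nat
  define zz where "zz = chi X"
  define bot where "bot = (\<lambda>_::nat. (None :: nat option))"
  have cst_in: "cst n \<in> B_X X" for n unfolding cst_def by (rule const_in)
  have zz_in: "zz \<in> B_X X" unfolding zz_def by (rule chi_in)
  have bot_in': "bot \<in> B_X X" unfolding bot_def by (rule bot_in)

  define codeN where "codeN = code (Cp Sp (Cp Op (constp 1)))"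
  define NN where "NN = cst codeN"
  have BN: "B_app NN (cst n) = Some (cst (Suc n))" for n
  proof -
    have J: "join NN (cst n) = (\<lambda>a. Some (if even a then codeN else n))"
      by (rule ext) (simp add: join_def NN_def cst_def)
    have "Phi codeN (join NN (cst n)) = cst (Suc n)"
      unfolding J codeN_def Phi_code by (simp add: cst_def)
    then show ?thesis by (simp add: B_app_def NN_def cst_def)
  qed
  have HS: "K2_app (f NN) (f (cst n)) = Some (f (cst (Suc n)))" for n
    using app[OF _ cst_in BN cst_in] cst_in NN_def by simp

  obtain pN where pN: "Phi pN (chi X) = Some \<circ> f NN" using fK cst_in NN_def by blast
  obtain pc0 where pc0: "Phi pc0 (chi X) = Some \<circ> f (cst 0)" using fK cst_in by blast
  obtain pz where pz: "Phi pz (chi X) = Some \<circ> f zz" using fK zz_in by blast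
  obtain pt where pt: "Phi pt (chi X) = Some \<circ> f (cst 0)" using fK cst_in by blast
  define eN where "eN = f NN 0"
  define P where "P = CHK pN eN pc0 pz pt"
  define d where "d = dcode (code P)"
  define gd where "gd a = (if even a then d else chiv X (a div 2))" for a
  have gdX: "gd (Suc (u + u)) = (if u \<in> X then 1 else 0)" for u by (simp add: gd_def chiv_def)
  have gd0: "gd 0 = d" by (simp add: gd_def)
  have join_d: "join (cst d) zz = (\<lambda>a. Some (gd a))"
    by (rule ext) (simp add: join_def cst_def zz_def chi_eq gd_def)

  define sd where "sd = fst (sqf pN eN pc0 d)"
  define qd where "qd = snd (sqf pN eN pc0 d)"
  define fin where "fin = finf pN eN pc0 pz d"
  define Q where "Q \<longleftrightarrow> (\<exists>m v w ef L p1 p2 p3. valid gd (decl L) \<and>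
      ptr (decl L) p1 (mkJ 0 sd qd 0 ef) \<and> ptr (decl L) p2 (mkJ 0 fin ef m v) \<and>
      ptr (decl L) p3 (mkJ 0 0 pt m w) \<and> v \<noteq> w)"
  have QP: "(\<exists>k. eval gd P (prod_encode (k, x)) = 0) \<longleftrightarrow> Q" for x
  proof
    assume "\<exists>k. eval gd P (prod_encode (k, x)) = 0"
    then obtain k where k: "eval gd P (prod_encode (k, x)) = 0" by blast
    obtain m v w ef L p1 p2 p3 where "k = cert m v w ef L p1 p2 p3" using cert_surj by blast
    then have "eval gd P (prod_encode (cert m v w ef L p1 p2 p3, x)) = 0" using k by simp
    then show Q unfolding Q_def P_def CHK_iff gd0 sd_def qd_def fin_def by blast
  next
    assume Q
    then obtain m v w ef L p1 p2 p3 where "valid gd (decl L) \<and>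
      ptr (decl L) p1 (mkJ 0 sd qd 0 ef) \<and> ptr (decl L) p2 (mkJ 0 fin ef m v) \<and>
      ptr (decl L) p3 (mkJ 0 0 pt m w) \<and> v \<noteq> w" unfolding Q_def by blast
    then have "eval gd P (prod_encode (cert m v w ef L p1 p2 p3, x)) = 0"
      unfolding P_def CHK_iff gd0 sd_def qd_def fin_def by blast
    then show "\<exists>k. eval gd P (prod_encode (k, x)) = 0" by blast
  qed
  define ad where "ad = (if Q then cst 0 else bot)"
  have Bad: "B_app (cst d) zz = Some ad"
  proof -
    have "Phi d (join (cst d) zz) = Phi d (\<lambda>a. Some (gd a))" by (simp only: join_d)
    also have "\<dots> = ad"
      unfolding d_def Phi_d QP by (rule ext) (simp add: ad_def cst_def bot_def)
    finally have "Phi d (join (cst d) zz) = ad" .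
    then show ?thesis by (simp add: B_app_def cst_def)
  qed
  have ad_in: "ad \<in> B_X X" using cst_in bot_in' by (simp add: ad_def)
  have K2ad: "K2_app (f (cst d)) (f zz) = Some (f ad)" by (rule app[OF cst_in zz_in Bad ad_in])

  define H where "H n = f (cst n)" for n
  have C1: "Phi (snd (sqf pN eN pc0 n)) (Ora X (fst (sqf pN eN pc0 n))) = Some \<circ> H n" for n
  proof (induction n)
    case 0 then show ?case using pc0 by (simp add: H_def)
  next
    case (Suc n)
    have "Ora X (fst (sqf pN eN pc0 (Suc n))) = join (Some \<circ> f NN) (Some \<circ> H n)"
      using Suc pN by (simp add: prod.case_eq_if o_def)
    then show ?case using K2D[OF HS[of n]] by (simp add: H_def eN_def)
  qed
  have C2: "Phi (H d 0) (Ora X fin) = Some \<circ> f ad"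
  proof -
    have "Ora X fin = join (Some \<circ> H d) (Some \<circ> f zz)"
      using C1[of d] pz by (simp add: fin_def finf_def prod.case_eq_if o_def)
    then show ?thesis using K2D[OF K2ad] by (simp add: H_def)
  qed
  have C0: "Phi pt (Ora X 0) = Some \<circ> f (cst 0)" using pt by simp

  show False
  proof (cases Q)
    case True
    then obtain m v w ef L p1 p2 p3 where v: "valid gd (decl L)"
      and q1: "ptr (decl L) p1 (mkJ 0 sd qd 0 ef)" and q2: "ptr (decl L) p2 (mkJ 0 fin ef m v)"
      and q3: "ptr (decl L) p3 (mkJ 0 0 pt m w)" and vw: "v \<noteq> w" unfolding Q_def by blast
    have Hs: "\<And>i. i < length (decl L) \<Longrightarrow> holds X (fst (prod_decode (decl L ! i)))"
      using valid_sound[OF gdX v] by blast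
    have h1: "Defs.comp (Ora X sd) qd 0 ef" using ptr_holds[OF q1 Hs] by simp
    have h2: "Defs.comp (Ora X fin) ef m v" using ptr_holds[OF q2 Hs] by simp
    have h3: "Defs.comp (Ora X 0) pt m w" using ptr_holds[OF q3 Hs] by simp
    have ef: "ef = H d 0" using Phi_fun_det[OF C1[of d] h1[unfolded sd_def qd_def]] .
    have "v = f ad m" using Phi_fun_det[OF C2 h2[unfolded ef]] .
    moreover have "w = f (cst 0) m" using Phi_fun_det[OF C0 h3] .
    moreover have "ad = cst 0" using True by (simp add: ad_def)
    ultimately show False using vw by simp
  next
    case False
    then have "ad = bot" by (simp add: ad_def)
    moreover have "bot \<noteq> cst 0" by (auto simp: bot_def cst_def fun_eq_iff)
    ultimately have "f ad \<noteq> f (cst 0)" using inj ad_in cst_in by (metis inj_on_eq_iff)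
    then obtain m where m: "f ad m \<noteq> f (cst 0) m" by auto
    have h1: "Defs.comp (Ora X sd) qd 0 (H d 0)"
      using comp_of_Phi_fun[OF C1[of d]] by (simp add: sd_def qd_def)
    have h2: "Defs.comp (Ora X fin) (H d 0) m (f ad m)" using comp_of_Phi_fun[OF C2] .
    have h3: "Defs.comp (Ora X 0) pt m (f (cst 0) m)" using comp_of_Phi_fun[OF C0] .
    obtain xs1 where 1: "valid gd xs1" "has xs1 (mkJ 0 sd qd 0 (H d 0))" using complete[OF gdX h1] by blast
    obtain xs2 where 2: "valid gd xs2" "has xs2 (mkJ 0 fin (H d 0) m (f ad m))" using complete[OF gdX h2] by blast
    obtain xs3 where 3: "valid gd xs3" "has xs3 (mkJ 0 0 pt m (f (cst 0) m))" using complete[OF gdX h3] by blast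
    let ?xs = "xs1 @ xs2 @ xs3"
    have v: "valid gd ?xs" using 1 2 3 valid_append by blast
    have "has ?xs (mkJ 0 sd qd 0 (H d 0))" using 1 has_app1 by blast
    then obtain p1 where q1: "ptr ?xs p1 (mkJ 0 sd qd 0 (H d 0))" by (auto simp: has_def)
    have "has ?xs (mkJ 0 fin (H d 0) m (f ad m))" using 2 has_app1 has_app2 by blast
    then obtain p2 where q2: "ptr ?xs p2 (mkJ 0 fin (H d 0) m (f ad m))" by (auto simp: has_def)
    have "has ?xs (mkJ 0 0 pt m (f (cst 0) m))" using 3 has_app2 by blast
    then obtain p3 where q3: "ptr ?xs p3 (mkJ 0 0 pt m (f (cst 0) m))" by (auto simp: has_def)
    have Q unfolding Q_def
      apply (rule exI[of _ m], rule exI[of _ "f ad m"], rule exI[of _ "f (cst 0) m"], rule exI[of _ "H d 0"],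
             rule exI[of _ "encl ?xs"], rule exI[of _ p1], rule exI[of _ p2], rule exI[of _ p3])
      using v q1 q2 q3 m by simp
    then show False using False by blast
  qed
qed


end
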